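(* Let $(A,\circ,[\cdot,\cdot])$ be a dual pre-Poisson algebra. There is a compatible pre-dual pre-Poisson algebra structure on $(A,\circ,[\cdot,\cdot])$ if and only if there exists an invertible $\mathcal{O}$-operator on $(A,\circ,[\cdot,\cdot])$ (associated to some representation).
   Context: Field $\mathbb{F}$ of characteristic $0$. A dual pre-Poisson algebra $(A,\circ,[\cdot,\cdot])$: $x\circ(y\circ z)=(x\circ y)\circ z=(y\circ x)\circ z$; $[x,[y,z]]=[[x,y],z]+[y,[x,z]]$; $[x,y\circ z]=[x,y]\circ z+y\circ[x,z]$; $[x\circ y,z]=x\circ[y,z]+y\circ[x,z]$; $[x,y]\circ z=-[y,x]\circ z$. A representation of it is $(V;l_\circ,r_\circ,l_{[\cdot,\cdot]},r_{[\cdot,\cdot]})$, with $V$ a vector space and linear maps $A\to\mathrm{End}(V)$ satisfying, for all $x,y\in A$: $r_\circ(x)r_\circ(y)=r_\circ(y\circ x)=l_\circ(y)r_\circ(x)=r_\circ(x)l_\circ(y)$; $l_\circ(x\circ y)=l_\circ(x)l_\circ(y)=l_\circ(y)l_\circ(x)$; $l_{[\cdot,\cdot]}([x,y])=l_{[\cdot,\cdot]}(x)l_{[\cdot,\cdot]}(y)-l_{[\cdot,\cdot]}(y)l_{[\cdot,\cdot]}(x)$; $r_{[\cdot,\cdot]}([x,y])=r_{[\cdot,\cdot]}(y)r_{[\cdot,\cdot]}(x)+l_{[\cdot,\cdot]}(x)r_{[\cdot,\cdot]}(y)$; $r_{[\cdot,\cdot]}(x)r_{[\cdot,\cdot]}(y)=-r_{[\cdot,\cdot]}(x)l_{[\cdot,\cdot]}(y)$;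 $r_{[\cdot,\cdot]}(x\circ y)=r_\circ(y)r_{[\cdot,\cdot]}(x)+l_\circ(x)r_{[\cdot,\cdot]}(y)$; $l_{[\cdot,\cdot]}(x)r_\circ(y)=r_\circ(y)l_{[\cdot,\cdot]}(x)+r_\circ([x,y])$; $l_{[\cdot,\cdot]}(x)l_\circ(y)=l_\circ([x,y])+l_\circ(y)l_{[\cdot,\cdot]}(x)$; $r_{[\cdot,\cdot]}(x)r_\circ(y)=r_\circ([y,x])+l_\circ(y)r_{[\cdot,\cdot]}(x)$; $l_{[\cdot,\cdot]}(x\circ y)=l_\circ(x)l_{[\cdot,\cdot]}(y)+l_\circ(y)l_{[\cdot,\cdot]}(x)$; $r_{[\cdot,\cdot]}(x)(l_\circ-r_\circ)(y)=0$; $r_\circ(x)(l_{[\cdot,\cdot]}+r_{[\cdot,\cdot]})(y)=0$; $l_\circ([x,y]+[y,x])=0$. An $\mathcal{O}$-operator on $(A,\circ,[\cdot,\cdot])$ associated to such a representation is a linear map $T:V\to A$ with $T(u)\circ T(v)=T(l_\circ(T(u))v+r_\circ(T(v))u)$ and $[T(u),T(v)]=T(l_{[\cdot,\cdot]}(T(u))v+r_{[\cdot,\cdot]}(T(v))u)$ for all $u,v\in V$. A pre-dual pre-Poisson algebra is a vector space with bilinear operations $\rhd,\lhd,\succ,\prec$ satisfying for all $x,y,z$: $x\lhd(y\lhd z+y\rhd z)=(x\lhd y)\lhd z=(y\rhd x)\lhd z=y\rhd(x\lhd z)$; $x\rhd(y\rhd z)=(x\lhd y+x\rhd y)\rhd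 z=(y\lhd x+y\rhd x)\rhd z$; $(x\prec y+x\succ y)\succ z=x\succ(y\succ z)-y\succ(x\succ z)$; $(x\succ y)\prec z=-(y\prec x)\prec z$; $x\prec(y\prec z+y\succ z)=(x\prec y)\prec z+y\succ(x\prec z)$; $x\prec(y\rhd z+y\lhd z)=(x\prec y)\lhd z+y\rhd(x\prec z)$; $x\succ(y\lhd z)=(x\succ y)\lhd z+y\lhd(x\succ z+x\prec z)$; $x\succ(y\rhd z)=(x\succ y+x\prec y)\rhd z+y\rhd(x\succ z)$; $(x\lhd y)\prec z=x\lhd(y\succ z+y\prec z)+y\rhd(x\prec z)$; $(x\rhd y+x\lhd y)\succ z=x\rhd(y\succ z)+y\rhd(x\succ z)$; $(x\rhd y-y\lhd x)\prec z=0$; $(x\succ y+y\prec x)\lhd z=0$; $(x\succ y+x\prec y+y\succ x+y\prec x)\rhd z=0$. A compatible pre-dual pre-Poisson algebra structure on $(A,\circ,[\cdot,\cdot])$ is a pre-dual pre-Poisson algebra $(A,\rhd,\lhd,\succ,\prec)$ on the same space with $x\circ y=x\rhd y+x\lhd y$ and $[x,y]=x\succ y+x\prec y$ for all $x,y$. *)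

theory Defs
  imports Complex_Main
begin

(* An algebra over the field 'k is modelled by a carrier type 'a with an
   abelian group structure and a scalar multiplication s making it a
   vector space (Vector_Spaces.vector_space). *)

definition bilinear_op :: "('k::field \<Rightarrow> 'a::ab_group_add \<Rightarrow> 'a) \<Rightarrow> ('a \<Rightarrow> 'a \<Rightarrow> 'a) \<Rightarrow> bool" where
  "bilinear_op s f \<longleftrightarrow> (\<forall>x. Vector_Spaces.linear s s (f x)) \<and> (\<forall>y. Vector_Spaces.linear s s (\<lambda>x. f x y))"

definition dual_pre_Poisson ::
  "('k::field \<Rightarrow> 'a::ab_group_add \<Rightarrow> 'a) \<Rightarrow> ('a \<Rightarrow> 'a \<Rightarrow> 'a) \<Rightarrow> ('a \<Rightarrow> 'a \<Rightarrow> 'a) \<Rightarrow> bool" where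
  "dual_pre_Poisson s mul br \<longleftrightarrow> vector_space s \<and> bilinear_op s mul \<and> bilinear_op s br \<and>
    (\<forall>x y z.
       mul x (mul y z) = mul (mul x y) z \<and> mul (mul x y) z = mul (mul y x) z \<and>
       br x (br y z) = br (br x y) z + br y (br x z) \<and>
       br x (mul y z) = mul (br x y) z + mul y (br x z) \<and>
       br (mul x y) z = mul x (br y z) + mul y (br x z) \<and>
       mul (br x y) z = - mul (br y x) z)"

(* Representation (V; l_o, r_o, l_br, r_br): V a vector space over the same field
   with scalar multiplication sV; each l_o, r_o, l_br, r_br is a linear map A \<rightarrow> End(V). *)
definition dpp_representation ::
  "('k::field \<Rightarrow> 'a::ab_group_add \<Rightarrow> 'a) \<Rightarrow> ('a \<Rightarrow> 'a \<Rightarrow> 'a) \<Rightarrow> ('a \<Rightarrow> 'a \<Rightarrow> 'a) \<Rightarrow>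
   ('k \<Rightarrow> 'v::ab_group_add \<Rightarrow> 'v) \<Rightarrow>
   ('a \<Rightarrow> 'v \<Rightarrow> 'v) \<Rightarrow> ('a \<Rightarrow> 'v \<Rightarrow> 'v) \<Rightarrow> ('a \<Rightarrow> 'v \<Rightarrow> 'v) \<Rightarrow> ('a \<Rightarrow> 'v \<Rightarrow> 'v) \<Rightarrow> bool" where
  "dpp_representation s mul br sV lm rm lb rb \<longleftrightarrow> vector_space sV \<and>
    (\<forall>x. Vector_Spaces.linear sV sV (lm x) \<and> Vector_Spaces.linear sV sV (rm x) \<and>
         Vector_Spaces.linear sV sV (lb x) \<and> Vector_Spaces.linear sV sV (rb x)) \<and>
    (\<forall>v. Vector_Spaces.linear s sV (\<lambda>x. lm x v) \<and> Vector_Spaces.linear s sV (\<lambda>x. rm x v) \<and>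
         Vector_Spaces.linear s sV (\<lambda>x. lb x v) \<and> Vector_Spaces.linear s sV (\<lambda>x. rb x v)) \<and>
    (\<forall>x y v.
       rm x (rm y v) = rm (mul y x) v \<and> rm (mul y x) v = lm y (rm x v) \<and> lm y (rm x v) = rm x (lm y v) \<and>
       lm (mul x y) v = lm x (lm y v) \<and> lm x (lm y v) = lm y (lm x v) \<and>
       lb (br x y) v = lb x (lb y v) - lb y (lb x v) \<and>
       rb (br x y) v = rb y (rb x v) + lb x (rb y v) \<and>
       rb x (rb y v) = - rb x (lb y v) \<and>
       rb (mul x y) v = rm y (rb x v) + lm x (rb y v) \<and>
       lb x (rm y v) = rm y (lb x v) + rm (br x y) v \<and>
       lb x (lm y v) = lm (br x y) v + lm y (lb x v) \<and>
       rb x (rm y v) = rm (br y x) v + lm y (rb x v) \<and>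
       lb (mul x y) v = lm x (lb y v) + lm y (lb x v) \<and>
       rb x (lm y v - rm y v) = 0 \<and>
       rm x (lb y v + rb y v) = 0 \<and>
       lm (br x y + br y x) v = 0)"

definition O_operator ::
  "('k::field \<Rightarrow> 'a::ab_group_add \<Rightarrow> 'a) \<Rightarrow> ('a \<Rightarrow> 'a \<Rightarrow> 'a) \<Rightarrow> ('a \<Rightarrow> 'a \<Rightarrow> 'a) \<Rightarrow>
   ('k \<Rightarrow> 'v::ab_group_add \<Rightarrow> 'v) \<Rightarrow>
   ('a \<Rightarrow> 'v \<Rightarrow> 'v) \<Rightarrow> ('a \<Rightarrow> 'v \<Rightarrow> 'v) \<Rightarrow> ('a \<Rightarrow> 'v \<Rightarrow> 'v) \<Rightarrow> ('a \<Rightarrow> 'v \<Rightarrow> 'v) \<Rightarrow>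
   ('v \<Rightarrow> 'a) \<Rightarrow> bool" where
  "O_operator s mul br sV lm rm lb rb T \<longleftrightarrow> Vector_Spaces.linear sV s T \<and>
    (\<forall>u v. mul (T u) (T v) = T (lm (T u) v + rm (T v) u) \<and>
           br (T u) (T v) = T (lb (T u) v + rb (T v) u))"

definition has_invertible_O_operator ::
  "('k::field \<Rightarrow> 'a::ab_group_add \<Rightarrow> 'a) \<Rightarrow> ('a \<Rightarrow> 'a \<Rightarrow> 'a) \<Rightarrow> ('a \<Rightarrow> 'a \<Rightarrow> 'a) \<Rightarrow>
   ('k \<Rightarrow> 'v::ab_group_add \<Rightarrow> 'v) \<Rightarrow> bool" where
  "has_invertible_O_operator s mul br sV \<longleftrightarrow>
    (\<exists>lm rm lb rb T. dpp_representation s mul br sV lm rm lb rb \<and>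
       O_operator s mul br sV lm rm lb rb T \<and> bij T)"

definition pre_dual_pre_Poisson ::
  "('k::field \<Rightarrow> 'a::ab_group_add \<Rightarrow> 'a) \<Rightarrow> ('a \<Rightarrow> 'a \<Rightarrow> 'a) \<Rightarrow> ('a \<Rightarrow> 'a \<Rightarrow> 'a) \<Rightarrow>
   ('a \<Rightarrow> 'a \<Rightarrow> 'a) \<Rightarrow> ('a \<Rightarrow> 'a \<Rightarrow> 'a) \<Rightarrow> bool" where
  "pre_dual_pre_Poisson s rh lh sc pr \<longleftrightarrow> vector_space s \<and>
    bilinear_op s rh \<and> bilinear_op s lh \<and> bilinear_op s sc \<and> bilinear_op s pr \<and>
    (\<forall>x y z.
       lh x (lh y z + rh y z) = lh (lh x y) z \<and> lh (lh x y) z = lh (rh y x) z \<and>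
       lh (rh y x) z = rh y (lh x z) \<and>
       rh x (rh y z) = rh (lh x y + rh x y) z \<and> rh (lh x y + rh x y) z = rh (lh y x + rh y x) z \<and>
       sc (pr x y + sc x y) z = sc x (sc y z) - sc y (sc x z) \<and>
       pr (sc x y) z = - pr (pr y x) z \<and>
       pr x (pr y z + sc y z) = pr (pr x y) z + sc y (pr x z) \<and>
       pr x (rh y z + lh y z) = lh (pr x y) z + rh y (pr x z) \<and>
       sc x (lh y z) = lh (sc x y) z + lh y (sc x z + pr x z) \<and>
       sc x (rh y z) = rh (sc x y + pr x y) z + rh y (sc x z) \<and>
       pr (lh x y) z = lh x (sc y z + pr y z) + rh y (pr x z) \<and>
       sc (rh x y + lh x y) z = rh x (sc y z) + rh y (sc x z) \<and>
       pr (rh x y - lh y x) z = 0 \<and>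
       lh (sc x y + pr y x) z = 0 \<and>
       rh (sc x y + pr x y + sc y x + pr y x) z = 0)"

definition has_compatible_pre_dual_pre_Poisson ::
  "('k::field \<Rightarrow> 'a::ab_group_add \<Rightarrow> 'a) \<Rightarrow> ('a \<Rightarrow> 'a \<Rightarrow> 'a) \<Rightarrow> ('a \<Rightarrow> 'a \<Rightarrow> 'a) \<Rightarrow> bool" where
  "has_compatible_pre_dual_pre_Poisson s mul br \<longleftrightarrow>
    (\<exists>rh lh sc pr. pre_dual_pre_Poisson s rh lh sc pr \<and>
       (\<forall>x y. mul x y = rh x y + lh x y \<and> br x y = sc x y + pr x y))"

end

theory Submission
  imports Defs
begin

lemma dir1:
  fixes s :: "'k::field \<Rightarrow> 'a::ab_group_add \<Rightarrow> 'a"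
  assumes P: "pre_dual_pre_Poisson s rh lh sc pr"
    and C: "\<forall>x y. mul x y = rh x y + lh x y \<and> br x y = sc x y + pr x y"
  shows "has_invertible_O_operator s mul br s"
proof -
  have vs: "vector_space s" and B: "bilinear_op s rh" "bilinear_op s lh" "bilinear_op s sc" "bilinear_op s pr"
    and ax: "\<And>x y z.
       lh x (lh y z + rh y z) = lh (lh x y) z \<and> lh (lh x y) z = lh (rh y x) z \<and>
       lh (rh y x) z = rh y (lh x z) \<and>
       rh x (rh y z) = rh (lh x y + rh x y) z \<and> rh (lh x y + rh x y) z = rh (lh y x + rh y x) z \<and>
       sc (pr x y + sc x y) z = sc x (sc y z) - sc y (sc x z) \<and>
       pr (sc x y) z = - pr (pr y x) z \<and>
       pr x (pr y z + sc y z) = pr (pr x y) z + sc y (pr x z) \<and>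
       pr x (rh y z + lh y z) = lh (pr x y) z + rh y (pr x z) \<and>
       sc x (lh y z) = lh (sc x y) z + lh y (sc x z + pr x z) \<and>
       sc x (rh y z) = rh (sc x y + pr x y) z + rh y (sc x z) \<and>
       pr (lh x y) z = lh x (sc y z + pr y z) + rh y (pr x z) \<and>
       sc (rh x y + lh x y) z = rh x (sc y z) + rh y (sc x z) \<and>
       pr (rh x y - lh y x) z = 0 \<and>
       lh (sc x y + pr y x) z = 0 \<and>
       rh (sc x y + pr x y + sc y x + pr y x) z = 0"
    using P unfolding pre_dual_pre_Poisson_def by blast+
  have m: "\<And>x y. mul x y = rh x y + lh x y" and b: "\<And>x y. br x y = sc x y + pr x y" using C by auto
  have rep: "dpp_representation s mul br s rh (\<lambda>x v. lh v x) sc (\<lambda>x v. pr v x)"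
    unfolding dpp_representation_def
  proof (intro conjI allI)
    show "vector_space s" by fact
  next
    fix x
    show "Vector_Spaces.linear s s (rh x)" "Vector_Spaces.linear s s (\<lambda>v. lh v x)"
      "Vector_Spaces.linear s s (sc x)" "Vector_Spaces.linear s s (\<lambda>v. pr v x)"
      using B unfolding bilinear_op_def by auto
  next
    fix v
    show "Vector_Spaces.linear s s (\<lambda>x. rh x v)" "Vector_Spaces.linear s s (\<lambda>x. lh v x)"
      "Vector_Spaces.linear s s (\<lambda>x. sc x v)" "Vector_Spaces.linear s s (\<lambda>x. pr v x)"
      using B unfolding bilinear_op_def by auto
  next
    fix x y v
    show "lh (lh v y) x = lh v (mul y x)" using ax[of v y x] by (simp add: m add.commute)
    show "lh v (mul y x) = rh y (lh v x)" using ax[of v y x] by (simp add: m add.commute)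
    show "rh y (lh v x) = lh (rh y v) x" using ax[of v y x] by simp
    show "rh (mul x y) v = rh x (rh y v)" using ax[of x y v] by (simp add: m add.commute)
    show "rh x (rh y v) = rh y (rh x v)" using ax[of x y v] ax[of y x v] by (simp add: m add.commute)
    show "sc (br x y) v = sc x (sc y v) - sc y (sc x v)" using ax[of x y v] by (simp add: b add.commute)
    show "pr v (br x y) = pr (pr v x) y + sc x (pr v y)" using ax[of v x y] by (simp add: b add.commute)
    show "pr (pr v y) x = - pr (sc y v) x" using ax[of y v x] by simp
    show "pr v (mul x y) = lh (pr v x) y + rh x (pr v y)" using ax[of v x y] by (simp add: m add.commute)
    show "sc x (lh v y) = lh (sc x v) y + lh v (br x y)" using ax[of x v y] by (simp add: b)
    show "sc x (rh y v) = rh (br x y) v + rh y (sc x v)" using ax[of x y v] by (simp add: b)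
    show "pr (lh v y) x = lh v (br y x) + rh y (pr v x)" using ax[of v y x] by (simp add: b)
    show "sc (mul x y) v = rh x (sc y v) + rh y (sc x v)" using ax[of x y v] by (simp add: m)
    show "pr (rh y v - lh v y) x = 0" using ax[of y v x] by simp
    show "lh (sc y v + pr v y) x = 0" using ax[of y v x] by simp
    show "rh (br x y + br y x) v = 0" using ax[of x y v] by (simp add: b add.assoc)
  qed
  have "O_operator s mul br s rh (\<lambda>x v. lh v x) sc (\<lambda>x v. pr v x) id"
  proof -
    have "Vector_Spaces.linear s s id" using vs unfolding Vector_Spaces.linear_iff by simp
    then show ?thesis unfolding O_operator_def by (simp add: m b)
  qed
  then show ?thesis unfolding has_invertible_O_operator_def using rep by blast
qed


lemma dir2:
  fixes s :: "'k::field \<Rightarrow> 'a::ab_group_add \<Rightarrow> 'a"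
    and sV :: "'k \<Rightarrow> 'v::ab_group_add \<Rightarrow> 'v"
  assumes D: "dual_pre_Poisson s mul br"
    and R: "dpp_representation s mul br sV lm rm lb rb"
    and O: "O_operator s mul br sV lm rm lb rb T"
    and bT: "bij T"
  shows "has_compatible_pre_dual_pre_Poisson s mul br"
proof -
  define Ti where "Ti = inv T"
  have TTi[simp]: "\<And>a. T (Ti a) = a" unfolding Ti_def using bT by (simp add: bij_is_surj surj_f_inv_f)
  have TiT[simp]: "\<And>u. Ti (T u) = u" unfolding Ti_def using bT by (simp add: bij_is_inj)
  have vs: "vector_space s" using D unfolding dual_pre_Poisson_def by blast
  have linT: "Vector_Spaces.linear sV s T" using O unfolding O_operator_def by blast
  have vsV: "vector_space sV" using linT unfolding Vector_Spaces.linear_iff by blast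
  have Tadd: "\<And>u v. T (u + v) = T u + T v" and Tsc: "\<And>c u. T (sV c u) = s c (T u)"
    using linT unfolding Vector_Spaces.linear_iff by blast+
  have T0[simp]: "T 0 = 0" by (metis Tadd add_cancel_right_right)
  have Tdiff: "\<And>u v. T (u - v) = T u - T v" by (metis Tadd diff_add_cancel eq_diff_eq)
  have linTi: "Vector_Spaces.linear s sV Ti"
    unfolding Vector_Spaces.linear_iff
  proof (intro conjI allI)
    fix a b c
    show "Ti (a + b) = Ti a + Ti b" by (metis TTi TiT Tadd)
    show "Ti (s c a) = sV c (Ti a)" by (metis TTi TiT Tsc)
  qed (fact vs vsV)+
  have Ocond: "\<And>u v. mul (T u) (T v) = T (lm (T u) v + rm (T v) u) \<and>
           br (T u) (T v) = T (lb (T u) v + rb (T v) u)" using O unfolding O_operator_def by blast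
  have rl: "\<And>x. Vector_Spaces.linear sV sV (lm x) \<and> Vector_Spaces.linear sV sV (rm x) \<and>
         Vector_Spaces.linear sV sV (lb x) \<and> Vector_Spaces.linear sV sV (rb x)"
   and rl2: "\<And>v. Vector_Spaces.linear s sV (\<lambda>x. lm x v) \<and> Vector_Spaces.linear s sV (\<lambda>x. rm x v) \<and>
         Vector_Spaces.linear s sV (\<lambda>x. lb x v) \<and> Vector_Spaces.linear s sV (\<lambda>x. rb x v)"
   and ri: "\<And>x y v.
       rm x (rm y v) = rm (mul y x) v \<and> rm (mul y x) v = lm y (rm x v) \<and> lm y (rm x v) = rm x (lm y v) \<and>
       lm (mul x y) v = lm x (lm y v) \<and> lm x (lm y v) = lm y (lm x v) \<and>
       lb (br x y) v = lb x (lb y v) - lb y (lb x v) \<and>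
       rb (br x y) v = rb y (rb x v) + lb x (rb y v) \<and>
       rb x (rb y v) = - rb x (lb y v) \<and>
       rb (mul x y) v = rm y (rb x v) + lm x (rb y v) \<and>
       lb x (rm y v) = rm y (lb x v) + rm (br x y) v \<and>
       lb x (lm y v) = lm (br x y) v + lm y (lb x v) \<and>
       rb x (rm y v) = rm (br y x) v + lm y (rb x v) \<and>
       lb (mul x y) v = lm x (lb y v) + lm y (lb x v) \<and>
       rb x (lm y v - rm y v) = 0 \<and>
       rm x (lb y v + rb y v) = 0 \<and>
       lm (br x y + br y x) v = 0"
    using R unfolding dpp_representation_def by blast+
  define rh where "rh = (\<lambda>x y. T (lm x (Ti y)))"
  define lh where "lh = (\<lambda>x y. T (rm y (Ti x)))"
  define sc where "sc = (\<lambda>x y. T (lb x (Ti y)))"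
  define pr where "pr = (\<lambda>x y. T (rb y (Ti x)))"
  have m: "\<And>x y. mul x y = rh x y + lh x y"
  proof -
    fix x y
    show "mul x y = rh x y + lh x y" using Ocond[of "Ti x" "Ti y"] unfolding rh_def lh_def by (simp add: Tadd)
  qed
  have b: "\<And>x y. br x y = sc x y + pr x y"
  proof -
    fix x y
    show "br x y = sc x y + pr x y" using Ocond[of "Ti x" "Ti y"] unfolding sc_def pr_def by (simp add: Tadd)
  qed
  have lc: "\<And>f g. Vector_Spaces.linear s sV f \<Longrightarrow> Vector_Spaces.linear sV s g \<Longrightarrow> Vector_Spaces.linear s s (g \<circ> f)"
    by (rule Vector_Spaces.linear_compose)
  have lc2: "\<And>f g. Vector_Spaces.linear sV sV f \<Longrightarrow> Vector_Spaces.linear sV s g \<Longrightarrow> Vector_Spaces.linear sV s (g \<circ> f)"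
    by (rule Vector_Spaces.linear_compose)
  have lc3: "\<And>f g. Vector_Spaces.linear s sV f \<Longrightarrow> Vector_Spaces.linear sV sV g \<Longrightarrow> Vector_Spaces.linear s sV (g \<circ> f)"
    by (rule Vector_Spaces.linear_compose)
  have rla: "\<And>x. Vector_Spaces.linear sV sV (lm x)" "\<And>x. Vector_Spaces.linear sV sV (rm x)"
     "\<And>x. Vector_Spaces.linear sV sV (lb x)" "\<And>x. Vector_Spaces.linear sV sV (rb x)" using rl by blast+
  have rlb: "\<And>v. Vector_Spaces.linear s sV (\<lambda>x. lm x v)" "\<And>v. Vector_Spaces.linear s sV (\<lambda>x. rm x v)"
     "\<And>v. Vector_Spaces.linear s sV (\<lambda>x. lb x v)" "\<And>v. Vector_Spaces.linear s sV (\<lambda>x. rb x v)" using rl2 by blast+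
  have lT: "\<And>f. Vector_Spaces.linear s sV f \<Longrightarrow> Vector_Spaces.linear s s (\<lambda>y. T (f y))"
    using lc[OF _ linT] by (simp add: comp_def)
  have lTi: "\<And>g. Vector_Spaces.linear sV sV g \<Longrightarrow> Vector_Spaces.linear s sV (\<lambda>y. g (Ti y))"
    using lc3[OF linTi] by (simp add: comp_def)
  have B: "bilinear_op s rh" "bilinear_op s lh" "bilinear_op s sc" "bilinear_op s pr"
    unfolding bilinear_op_def rh_def lh_def sc_def pr_def
    by (intro conjI allI lT lTi rla rlb)+
  have Tneg: "\<And>u. T (- u) = - T u" by (metis Tdiff T0 diff_0)
  have m': "\<And>x y. lh x y + rh x y = mul x y" "\<And>x y. rh x y + lh x y = mul x y"
    using m by (simp_all add: add.commute)
  have b': "\<And>x y. pr x y + sc x y = br x y" "\<And>x y. sc x y + pr x y = br x y"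
    using b by (simp_all add: add.commute)
  have P: "pre_dual_pre_Poisson s rh lh sc pr"
    unfolding pre_dual_pre_Poisson_def
  proof (intro conjI allI)
    fix x y z
    show "lh x (lh y z + rh y z) = lh (lh x y) z" using ri[of z y "Ti x"] by ((simp only: m' b')?, simp add: rh_def lh_def sc_def pr_def Tadd[symmetric] Tdiff[symmetric] Tneg[symmetric])
    show "lh (lh x y) z = lh (rh y x) z" using ri[of z y "Ti x"] by ((simp only: m' b')?, simp add: rh_def lh_def sc_def pr_def Tadd[symmetric] Tdiff[symmetric] Tneg[symmetric])
    show "lh (rh y x) z = rh y (lh x z)" using ri[of z y "Ti x"] by ((simp only: m' b')?, simp add: rh_def lh_def sc_def pr_def Tadd[symmetric] Tdiff[symmetric] Tneg[symmetric])
    show "rh x (rh y z) = rh (lh x y + rh x y) z" using ri[of x y "Ti z"] by ((simp only: m' b')?, simp add: rh_def lh_def sc_def pr_def Tadd[symmetric] Tdiff[symmetric] Tneg[symmetric])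
    have e5: "lm (mul x y) (Ti z) = lm (mul y x) (Ti z)" using ri[of x y "Ti z"] ri[of y x "Ti z"] by metis
    show "rh (lh x y + rh x y) z = rh (lh y x + rh y x) z" using e5 by (simp only: m', simp add: rh_def)
    show "sc (pr x y + sc x y) z = sc x (sc y z) - sc y (sc x z)" using ri[of x y "Ti z"] by ((simp only: m' b')?, simp add: rh_def lh_def sc_def pr_def Tadd[symmetric] Tdiff[symmetric] Tneg[symmetric])
    show "pr (sc x y) z = - pr (pr y x) z" using ri[of z x "Ti y"] by ((simp only: m' b')?, simp add: rh_def lh_def sc_def pr_def Tadd[symmetric] Tdiff[symmetric] Tneg[symmetric])
    show "pr x (pr y z + sc y z) = pr (pr x y) z + sc y (pr x z)" using ri[of y z "Ti x"] by ((simp only: m' b')?, simp add: rh_def lh_def sc_def pr_def Tadd[symmetric] Tdiff[symmetric] Tneg[symmetric])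
    show "pr x (rh y z + lh y z) = lh (pr x y) z + rh y (pr x z)" using ri[of y z "Ti x"] by ((simp only: m' b')?, simp add: rh_def lh_def sc_def pr_def Tadd[symmetric] Tdiff[symmetric] Tneg[symmetric])
    show "sc x (lh y z) = lh (sc x y) z + lh y (sc x z + pr x z)" using ri[of x z "Ti y"] by ((simp only: m' b')?, simp add: rh_def lh_def sc_def pr_def Tadd[symmetric] Tdiff[symmetric] Tneg[symmetric])
    show "sc x (rh y z) = rh (sc x y + pr x y) z + rh y (sc x z)" using ri[of x y "Ti z"] by ((simp only: m' b')?, simp add: rh_def lh_def sc_def pr_def Tadd[symmetric] Tdiff[symmetric] Tneg[symmetric])
    show "pr (lh x y) z = lh x (sc y z + pr y z) + rh y (pr x z)" using ri[of z y "Ti x"] by ((simp only: m' b')?, simp add: rh_def lh_def sc_def pr_def Tadd[symmetric] Tdiff[symmetric] Tneg[symmetric])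
    show "sc (rh x y + lh x y) z = rh x (sc y z) + rh y (sc x z)" using ri[of x y "Ti z"] by ((simp only: m' b')?, simp add: rh_def lh_def sc_def pr_def Tadd[symmetric] Tdiff[symmetric] Tneg[symmetric])
    show "pr (rh x y - lh y x) z = 0" using ri[of z x "Ti y"] by ((simp only: m' b')?, simp add: rh_def lh_def sc_def pr_def Tadd[symmetric] Tdiff[symmetric] Tneg[symmetric])
    show "lh (sc x y + pr y x) z = 0" using ri[of z x "Ti y"] by ((simp only: m' b')?, simp add: rh_def lh_def sc_def pr_def Tadd[symmetric] Tdiff[symmetric] Tneg[symmetric])
    have e16: "sc x y + pr x y + sc y x + pr y x = br x y + br y x" by (simp add: b add.assoc)
    show "rh (sc x y + pr x y + sc y x + pr y x) z = 0" using ri[of x y "Ti z"] unfolding e16 by (simp add: rh_def)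
  qed (fact vs B)+
  show ?thesis unfolding has_compatible_pre_dual_pre_Poisson_def using P m b by blast
qed


theorem theorem3p29:
  fixes s :: "'k::field_char_0 \<Rightarrow> 'a::ab_group_add \<Rightarrow> 'a"
    and mul br :: "'a \<Rightarrow> 'a \<Rightarrow> 'a"
    and sV :: "'k \<Rightarrow> 'v::ab_group_add \<Rightarrow> 'v"
  assumes "dual_pre_Poisson s mul br"
  shows "(has_compatible_pre_dual_pre_Poisson s mul br \<longleftrightarrow> has_invertible_O_operator s mul br s)
         \<and> (has_invertible_O_operator s mul br sV \<longrightarrow> has_compatible_pre_dual_pre_Poisson s mul br)"
proof -
  have I: "has_invertible_O_operator s mul br sW \<Longrightarrow> has_compatible_pre_dual_pre_Poisson s mul br"
    for sW :: "'k \<Rightarrow> 'w::ab_group_add \<Rightarrow> 'w"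
    unfolding has_invertible_O_operator_def using dir2[OF assms] by blast
  have II: "has_compatible_pre_dual_pre_Poisson s mul br \<Longrightarrow> has_invertible_O_operator s mul br s"
    unfolding has_compatible_pre_dual_pre_Poisson_def using dir1 by blast
  show ?thesis using I[of s] I[of sV] II by blast
qed

end
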